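(* Let $q$ be a prime power and let $C\subseteq\mathrm{GF}(q^m)^n$ be a (linear or nonlinear) code with $n\le m$, $|C|=q^{mk}$ for an integer $1\le k\le n$, and minimum rank distance $d_{\mathrm R}=n-k+1$. Let $\mathcal K$ be any elementary linear subspace of $\mathrm{GF}(q^m)^n$ of dimension $k$ and $\bar{\mathcal K}$ any elementary linear subspace of dimension $n-k$ with $\mathcal K\oplus\bar{\mathcal K}=\mathrm{GF}(q^m)^n$. Then for every $\mathbf w\in\mathcal K$ there exists a unique codeword $\mathbf c\in C$ with $\mathbf c_{\mathcal K}=\mathbf w$, where $\mathbf c_{\mathcal K}$ denotes the projection of $\mathbf c$ onto $\mathcal K$ along $\bar{\mathcal K}$.
   Context: For $\mathbf x=(x_0,\dots,x_{n-1})\in\mathrm{GF}(q^m)^n$, $\mathrm{rk}(\mathbf x)$ is the dimension over $\mathrm{GF}(q)$ of the $\mathrm{GF}(q)$-span of $x_0,\dots,x_{n-1}$; the minimum rank distance of $C$ is the minimum of $\mathrm{rk}(\mathbf c-\mathbf d)$ over distinct codewords. A linear subspace of the $\mathrm{GF}(q^m)$-vector space $\mathrm{GF}(q^m)^n$ is elementary if it has a basis consisting of vectors in $\mathrm{GF}(q)^n$. The projection of $\mathbf x$ onto $\mathcal K$ along $\bar{\mathcal K}$ is the unique $\mathbf x_{\mathcal K}\in\mathcal K$ with $\mathbf x-\mathbf x_{\mathcal K}\in\bar{\mathcal K}$. *)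

theory Defs
  imports "HOL-Analysis.Analysis"
begin

text \<open>GF(q) is modelled by a finite field type 'b, GF(q^m) by a finite field type 'a,
  and 'b is embedded in 'a via an injective ring homomorphism emb.
  GF(q^m) is a vector space over GF(q) with scalar multiplication (\<lambda>c x. emb c * x).\<close>

definition field_emb :: "('b::field \<Rightarrow> 'a::field) \<Rightarrow> bool" where
  "field_emb emb \<longleftrightarrow> inj emb \<and> emb 1 = 1 \<and>
     (\<forall>x y. emb (x + y) = emb x + emb y) \<and> (\<forall>x y. emb (x * y) = emb x * emb y)"

definition rk :: "('b::field \<Rightarrow> 'a::field) \<Rightarrow> 'a ^ 'n \<Rightarrow> nat" where
  "rk emb x = vector_space.dim (\<lambda>c y. emb c * y) (range (\<lambda>i. x $ i))"

definition min_rank_dist :: "('b::field \<Rightarrow> 'a::field) \<Rightarrow> ('a ^ 'n) set \<Rightarrow> nat" where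
  "min_rank_dist emb C = Min {rk emb (c - d) | c d. c \<in> C \<and> d \<in> C \<and> c \<noteq> d}"

definition elementary :: "('b::field \<Rightarrow> 'a::field) \<Rightarrow> ('a ^ 'n) set \<Rightarrow> bool" where
  "elementary emb U \<longleftrightarrow> vec.subspace U \<and>
     (\<exists>B. B \<subseteq> {v. \<forall>i. v $ i \<in> range emb} \<and> vec.independent B \<and> vec.span B = U)"

definition proj :: "('a::field ^ 'n) set \<Rightarrow> ('a ^ 'n) set \<Rightarrow> 'a ^ 'n \<Rightarrow> 'a ^ 'n" where
  "proj K Kbar x = (THE y. y \<in> K \<and> x - y \<in> Kbar)"

end

theory Submission
  imports Defs
begin

lemma emb_vs:
  assumes "field_emb emb"
  shows "vector_space (\<lambda>c (y::'a::field). (emb::'b::field \<Rightarrow> 'a) c * y)"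
  using assms unfolding field_emb_def
  by unfold_locales (auto simp: algebra_simps)

lemma card_span_le:
  fixes B :: "('a::{field,finite} ^ 'n) set"
  assumes "finite B"
  shows "card (vec.span B) \<le> CARD('a) ^ card B"
proof -
  have "vec.span B \<subseteq> (\<lambda>u. \<Sum>v\<in>B. u v *s v) ` (PiE B (\<lambda>_. UNIV))"
  proof
    fix x assume "x \<in> vec.span B"
    then obtain u where x: "x = (\<Sum>v\<in>B. u v *s v)"
      using vec.span_finite[OF assms] by auto
    have "x = (\<Sum>v\<in>B. restrict u B v *s v)" unfolding x by (rule sum.cong) auto
    moreover have "restrict u B \<in> PiE B (\<lambda>_. UNIV)" by auto
    ultimately show "x \<in> (\<lambda>u. \<Sum>v\<in>B. u v *s v) ` (PiE B (\<lambda>_. UNIV))" by blast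
  qed
  hence "card (vec.span B) \<le> card ((\<lambda>u. \<Sum>v\<in>B. u v *s v) ` (PiE B (\<lambda>_. UNIV::'a set)))"
    by (intro card_mono) auto
  also have "\<dots> \<le> card (PiE B (\<lambda>_. UNIV::'a set))" by (rule card_image_le) (simp add: assms finite_PiE)
  also have "\<dots> = CARD('a) ^ card B" by (simp add: card_PiE assms)
  finally show ?thesis .
qed

lemma rank_le:
  fixes emb :: "'b::{field,finite} \<Rightarrow> 'a::{field,finite}" and B :: "('a ^ 'n) set"
  assumes emb: "field_emb emb"
    and Bsub: "B \<subseteq> {v. \<forall>i. v $ i \<in> range emb}"
    and x: "x \<in> vec.span B"
  shows "rk emb x \<le> card B"
proof -
  interpret V: vector_space "\<lambda>c (y::'a). emb c * y" by (rule emb_vs[OF emb])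
  have fB: "finite B" by simp
  obtain u where xu: "x = (\<Sum>v\<in>B. u v *s v)"
    using vec.span_finite[OF fB] x by auto
  have "range (\<lambda>i. x $ i) \<subseteq> V.span (u ` B)"
  proof safe
    fix i
    have "\<forall>v\<in>B. \<exists>e. v $ i = emb e" using Bsub by auto
    then obtain e where e: "\<And>v. v \<in> B \<Longrightarrow> v $ i = emb (e v)" by metis
    have "x $ i = (\<Sum>v\<in>B. u v * v $ i)" unfolding xu by (simp add: sum_component)
    also have "\<dots> = (\<Sum>v\<in>B. emb (e v) * u v)" by (rule sum.cong) (auto simp: e)
    finally have xi: "x $ i = (\<Sum>v\<in>B. emb (e v) * u v)" .
    have "(\<Sum>v\<in>B. emb (e v) * u v) \<in> V.span (u ` B)"
      by (intro V.span_sum V.span_scale V.span_base) auto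
    thus "x $ i \<in> V.span (u ` B)" using xi by simp
  qed
  hence "V.dim (range (\<lambda>i. x $ i)) \<le> card (u ` B)"
    by (intro V.dim_le_card) auto
  also have "\<dots> \<le> card B" by (rule card_image_le[OF fB])
  finally show ?thesis unfolding rk_def .
qed

theorem lemma5:
  fixes emb :: "'b::{field,finite} \<Rightarrow> 'a::{field,finite}"
    and C K Kbar :: "('a ^ 'n) set"
    and q m k :: nat
  assumes emb: "field_emb emb"
    and q: "CARD('b) = q" and qm: "CARD('a) = q ^ m"
    and nm: "CARD('n) \<le> m"
    and k: "1 \<le> k" "k \<le> CARD('n)"
    and Csize: "card C = q ^ (m * k)"
    and dR: "min_rank_dist emb C = CARD('n) - k + 1"
    and K: "elementary emb K" "vec.dim K = k"
    and Kbar: "elementary emb Kbar" "vec.dim Kbar = CARD('n) - k"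
    and dsum: "K \<inter> Kbar = {0}" "{x + y | x y. x \<in> K \<and> y \<in> Kbar} = UNIV"
  shows "\<forall>w \<in> K. \<exists>!c. c \<in> C \<and> proj K Kbar c = w"
proof -
  have sK: "vec.subspace K" and sKb: "vec.subspace Kbar"
    using K(1) Kbar(1) unfolding elementary_def by auto
  have projP: "proj K Kbar x \<in> K \<and> x - proj K Kbar x \<in> Kbar" for x
  proof -
    obtain a b where ab: "x = a + b" "a \<in> K" "b \<in> Kbar" using dsum(2) by blast
    have "\<exists>!y. y \<in> K \<and> x - y \<in> Kbar"
    proof (rule ex1I[of _ a])
      show "a \<in> K \<and> x - a \<in> Kbar" using ab by simp
    next
      fix y assume y: "y \<in> K \<and> x - y \<in> Kbar"
      have yK: "y - a \<in> K" using y ab sK by (simp add: vec.subspace_diff)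
      have e: "y - a = b - (x - y)" using ab by simp
      have "b - (x - y) \<in> Kbar" using vec.subspace_diff[OF sKb, of b "x - y"] y ab(3) by blast
      hence "y - a \<in> Kbar" by (subst e)
      with yK have "y - a \<in> K \<inter> Kbar" by blast
      hence "y - a = 0" using dsum(1) by blast
      thus "y = a" by simp
    qed
    thus ?thesis unfolding proj_def by (rule theI')
  qed
  obtain B where B: "B \<subseteq> {v. \<forall>i. v $ i \<in> range emb}" "vec.independent B" "vec.span B = Kbar"
    using Kbar(1) unfolding elementary_def by auto
  have cardB: "card B = CARD('n) - k"
    using Kbar(2) B vec.dim_span_eq_card_independent by metis
  have inj: "inj_on (proj K Kbar) C"
  proof (rule inj_onI, rule ccontr)
    fix c d assume cd: "c \<in> C" "d \<in> C" "proj K Kbar c = proj K Kbar d" "c \<noteq> d"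
    have "c - d = (c - proj K Kbar c) - (d - proj K Kbar d)" using cd by simp
    moreover have "(c - proj K Kbar c) - (d - proj K Kbar d) \<in> Kbar"
      using projP[of c] projP[of d] vec.subspace_diff[OF sKb] by blast
    ultimately have "c - d \<in> Kbar" by simp
    hence r1: "rk emb (c - d) \<le> CARD('n) - k"
      using rank_le[OF emb B(1), of "c - d"] B(3) cardB by simp
    have fin: "finite {rk emb (c - d) |c d. c \<in> C \<and> d \<in> C \<and> c \<noteq> d}"
    proof -
      have "{rk emb (c - d) |c d. c \<in> C \<and> d \<in> C \<and> c \<noteq> d} \<subseteq> range (rk emb :: 'a ^ 'n \<Rightarrow> nat)"
        by auto
      thus ?thesis by (rule finite_subset) simp
    qed
    have "min_rank_dist emb C \<le> rk emb (c - d)"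
      unfolding min_rank_dist_def using cd by (intro Min_le[OF fin]) blast
    thus False using r1 dR by simp
  qed
  obtain BK where BK: "vec.independent BK" "vec.span BK = K"
    using K(1) unfolding elementary_def by auto
  have cardBK: "card BK = k"
    using K(2) BK vec.dim_span_eq_card_independent by metis
  have cK: "card K \<le> q ^ (m * k)"
    using card_span_le[of BK] BK cardBK qm by (simp add: power_mult)
  have img: "proj K Kbar ` C \<subseteq> K" using projP by auto
  have "card (proj K Kbar ` C) = card C" using inj by (rule card_image)
  moreover have "card (proj K Kbar ` C) \<le> card K" by (rule card_mono[OF _ img]) simp
  ultimately have "card (proj K Kbar ` C) = card K" using cK Csize by linarith
  hence eq: "proj K Kbar ` C = K"
    by (intro card_subset_eq[OF _ img]) simp_all
  show ?thesis
  proof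
    fix w assume "w \<in> K"
    hence "w \<in> proj K Kbar ` C" by (simp only: eq)
    then have "\<exists>x\<in>C. w = proj K Kbar x" unfolding image_iff .
    then obtain c where c1: "c \<in> C" and c2: "w = proj K Kbar c" ..
    have cw: "c \<in> C" "proj K Kbar c = w" using c1 c2 by simp_all
    show "\<exists>!c. c \<in> C \<and> proj K Kbar c = w"
    proof (rule ex1I[of _ c])
      show "c \<in> C \<and> proj K Kbar c = w" using cw by blast
    next
      fix c' assume "c' \<in> C \<and> proj K Kbar c' = w"
      thus "c' = c" using cw inj_onD[OF inj, of c' c] by simp
    qed
  qed
qed

end
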